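(* Let $z\in\mathbb{N}$, $z\ge1$, and let $w\in\{0,1\}^*$ be the standard binary representation of $z$ (no leading zeros). Let $(o_k)_{k\ge0}$ be the sequence of odd terms of the Collatz sequence $z,T(z),T^2(z),\dots$, listed in order of occurrence (so $o_0$ is the first odd term). Then for every $y_0\le0$, in the limit configuration $c_\infty[w]$ the cells of row $y_0$ whose sum bit is defined (i.e. not $\bot$) are exactly the cells $(x,y_0)$ with $x\le x_1$ for some integer $x_1$, only finitely many of these sum bits equal $1$, and, writing $b_x$ for the sum bit of $(x,y_0)$, one has $\sum_{x\le x_1} b_x\,2^{x_1-x}=2^{m}\,o_{|y_0|}$ for some integer $m\ge0$. (That is, row $y_0$ reads, west to east, $0^\infty u\,0^m$ where $u$ is the binary representation of $o_{|y_0|}$.)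
   Context: The Collatz map $T:\mathbb{N}\to\mathbb{N}$ is $T(x)=x/2$ for even $x$ and $T(x)=(3x+1)/2$ for odd $x$. Notation: $E=(1,0)$, $W=(-1,0)$, $N=(0,1)$, $S=(0,-1)$ in $\mathbb{Z}^2$; $[P]\in\{0,1\}$ equals $1$ iff $P$ holds. Strings are indexed from the right: $w=w_{k-1}\cdots w_0$. The CQCA. State set $\Sigma=\{0,1,\bot\}^2\setminus\{(\bot,0),(\bot,1)\}$; a state $(s,c)$ has sum bit $s$ and carry bit $c$. A state is undefined if it is $(\bot,\bot)$, half-defined if $s\in\{0,1\}$ and $c=\bot$, and defined if $s,c\in\{0,1\}$. A configuration is a map $C:\mathbb{Z}^2\to\Sigma$. One step $F(C)$: first the non-local rule produces $C'$: for each $u$, $C'(u)=(0,1)$ if $C(u+W)=(1,\bot)$, $C(u)\in\{(0,\bot),(\bot,\bot)\}$, and $C(u+iE)\in\{(0,\bot),(\bot,\bot)\}$ for all integers $i\ge1$; otherwise $C'(u)=C(u)$. Then the local rule is applied to $C'$ at every cell simultaneously: (i) if $C'(u)=(s,\bot)$ with $s\in\{0,1\}$ and $C'(u+E)=(s',c')$ is defined, then $F(C)(u)=(s,[s+s'+c'\ge2])$; (ii) if $C'(u)=(\bot,\bot)$, $C'(u+N)=(s,\bot)$ is half-defined and $C'(u+N+E)=(s',c')$ is defined, then $F(C)(u)=((s+s'+c')\bmod 2,\bot)$; (iii) otherwise $F(C)(u)=C'(u)$. For $w\in\{0,1\}^*$ the initial configuration $c_0[w]$ is: $c_0[w](-i,0)=(w_{i-1},\bot)$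 for $1\le i\le|w|$, $c_0[w](-i,0)=(0,\bot)$ for $i>|w|$, and $(\bot,\bot)$ elsewhere. Every cell's state in $F^i(c_0[w])$ is eventually constant in $i$; $c_\infty[w]$ denotes the pointwise limit. *)

theory Defs
  imports Main "HOL-Library.Infinite_Set"
begin

definition T :: "nat \<Rightarrow> nat" where
  "T x = (if even x then x div 2 else (3 * x + 1) div 2)"

definition odd_term :: "nat \<Rightarrow> nat \<Rightarrow> nat" where
  "odd_term z k = (T ^^ enumerate {n. odd ((T ^^ n) z)} k) z"

text \<open>Standard binary representation, most significant bit first (head of list),
  no leading zeros (bin_rep 0 = []). True = 1, False = 0.\<close>
fun bin_rep :: "nat \<Rightarrow> bool list" where
  "bin_rep n = (if n = 0 then [] else bin_rep (n div 2) @ [odd n])"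

text \<open>A state (s,c): sum bit and carry bit; None = \<bottom>, Some True = 1, Some False = 0.\<close>
type_synonym state = "bool option \<times> bool option"
type_synonym config = "int \<times> int \<Rightarrow> state"

definition undef_or_zero :: "state \<Rightarrow> bool" where
  "undef_or_zero st \<longleftrightarrow> st = (Some False, None) \<or> st = (None, None)"

definition nonlocal_step :: "config \<Rightarrow> config" where
  "nonlocal_step C = (\<lambda>(x, y).
     if C (x - 1, y) = (Some True, None) \<and> undef_or_zero (C (x, y))
        \<and> (\<forall>i::int. i \<ge> 1 \<longrightarrow> undef_or_zero (C (x + i, y)))
     then (Some False, Some True) else C (x, y))"

definition local_step :: "config \<Rightarrow> config" where
  "local_step C = (\<lambda>(x, y).
     case C (x, y) of
       (Some s, None) \<Rightarrow>
         (case C (x + 1, y) of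
            (Some s', Some c') \<Rightarrow>
              (Some s, Some (of_bool s + of_bool s' + of_bool c' \<ge> (2::nat)))
          | _ \<Rightarrow> C (x, y))
     | (None, None) \<Rightarrow>
         (case C (x, y + 1) of
            (Some s, None) \<Rightarrow>
              (case C (x + 1, y + 1) of
                 (Some s', Some c') \<Rightarrow>
                   (Some (odd (of_bool s + of_bool s' + of_bool c' :: nat)), None)
               | _ \<Rightarrow> C (x, y))
          | _ \<Rightarrow> C (x, y))
     | _ \<Rightarrow> C (x, y))"

definition F :: "config \<Rightarrow> config" where
  "F C = local_step (nonlocal_step C)"

text \<open>Initial configuration; w is written w_{k-1} ... w_0 with w_0 the last list element.\<close>
definition c0 :: "bool list \<Rightarrow> config" where
  "c0 w = (\<lambda>(x, y).
     if y = 0 \<and> x \<le> -1 then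
       (if nat (-x) \<le> length w then (Some (rev w ! (nat (-x) - 1)), None)
        else (Some False, None))
     else (None, None))"

definition c_inf :: "bool list \<Rightarrow> config" where
  "c_inf w = (\<lambda>u. THE v. \<exists>n. \<forall>i\<ge>n. (F ^^ i) (c0 w) u = v)"

end

theory Submission
  imports Defs
begin



function tz :: "nat \<Rightarrow> nat" where
  "tz n = (if n = 0 \<or> odd n then 0 else Suc (tz (n div 2)))"
  by auto
termination by (relation "measure id") auto

declare tz.simps[simp del]

lemma tz_odd: "odd n \<Longrightarrow> tz n = 0" by (subst tz.simps) simp
lemma tz_evn: "n \<noteq> 0 \<Longrightarrow> even n \<Longrightarrow> tz n = Suc (tz (n div 2))" by (subst tz.simps) simp

lemma tz_dec: "n > 0 \<Longrightarrow> odd (n div 2 ^ tz n) \<and> n = 2 ^ tz n * (n div 2 ^ tz n)"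
proof (induction n rule: tz.induct)
  case (1 n)
  show ?case
  proof (cases "odd n")
    case True then show ?thesis by (simp add: tz_odd)
  next
    case False
    then have t: "tz n = Suc (tz (n div 2))" using 1 by (simp add: tz_evn)
    have pos: "n div 2 > 0" using False 1 by auto
    have IH: "odd (n div 2 div 2 ^ tz (n div 2)) \<and> n div 2 = 2 ^ tz (n div 2) * (n div 2 div 2 ^ tz (n div 2))"
      using 1 False pos by auto
    have "n div 2 ^ tz n = n div 2 div 2 ^ tz (n div 2)" by (simp add: t div_mult2_eq)
    moreover have "n = 2 * (n div 2)" using False by auto
    ultimately show ?thesis using IH t by (metis mult.assoc power_Suc)
  qed
qed

lemma low_bits_zero: "n > 0 \<Longrightarrow> j < tz n \<Longrightarrow> even (n div 2 ^ j)"
proof -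
  assume a: "n > 0" "j < tz n"
  define m where "m = n div 2 ^ tz n"
  have n: "n = 2 ^ tz n * m" using tz_dec[OF a(1)] m_def by simp
  have "(2::nat) ^ tz n = 2 ^ j * 2 ^ (tz n - j)" using a(2) by (simp add: power_add[symmetric])
  then have "n = 2 ^ j * (2 ^ (tz n - j) * m)" using n by (simp add: mult.assoc)
  then have "n div 2 ^ j = 2 ^ (tz n - j) * m" by (metis nonzero_mult_div_cancel_left power_not_zero zero_neq_numeral)
  then show ?thesis using a(2) by simp
qed

lemma high_bits: "n > 0 \<Longrightarrow> n div 2 ^ (tz n + i) = (n div 2 ^ tz n) div 2 ^ i"
  by (simp add: power_add div_mult2_eq)

lemma tz_even: "n > 0 \<Longrightarrow> even n \<Longrightarrow> tz n \<ge> 1"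
  by (simp add: tz_evn)

definition cin :: "nat \<Rightarrow> nat \<Rightarrow> nat \<Rightarrow> nat" where
  "cin a b i = (a mod 2^i + b mod 2^i + 1) div 2^i"

lemma cin0: "cin a b 0 = 1" by (simp add: cin_def)

lemma cin_le1: "cin a b i \<le> 1"
proof -
  have "a mod 2^i < 2^i" "b mod 2^i < (2::nat)^i" by simp_all
  then have "a mod 2^i + b mod 2^i + 1 < 2 * 2^i" by linarith
  then show ?thesis unfolding cin_def
    by (metis less_mult_imp_div_less less_Suc_eq_le numeral_2_eq_2 One_nat_def)
qed

lemma mod2pow_Suc: "(a::nat) mod 2 ^ Suc i = a mod 2^i + 2^i * (a div 2^i mod 2)"
  unfolding power_Suc2 mod_mult2_eq by (simp add: add.commute)

lemma cinSuc: "cin a b (Suc i) = (a div 2^i mod 2 + b div 2^i mod 2 + cin a b i) div 2"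
proof -
  define M :: nat where "M = 2^i"
  have M: "M > 0" by (simp add: M_def)
  define r where "r = (a mod M + b mod M + 1) mod M"
  have d: "a mod M + b mod M + 1 = M * cin a b i + r"
    unfolding cin_def r_def M_def by simp
  have ha: "a mod 2 ^ Suc i = a mod M + M * (a div M mod 2)" unfolding M_def by (rule mod2pow_Suc)
  have hb: "b mod 2 ^ Suc i = b mod M + M * (b div M mod 2)" unfolding M_def by (rule mod2pow_Suc)
  have "a mod 2 ^ Suc i + b mod 2 ^ Suc i + 1 = M * (a div M mod 2 + b div M mod 2 + cin a b i) + r"
    using d ha hb by (simp add: algebra_simps)
  moreover have "r < M" using M by (simp add: r_def)
  moreover have "2 ^ Suc i = M * 2" by (simp add: M_def)
  ultimately show ?thesis
  proof -
    define Q where "Q = a div M mod 2 + b div M mod 2 + cin a b i"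
    assume e1: "a mod 2 ^ Suc i + b mod 2 ^ Suc i + 1 = M * (a div M mod 2 + b div M mod 2 + cin a b i) + r"
      and e0: "r < M" and e2: "2 ^ Suc i = M * 2"
    have k: "(M * Q + r) div M = Q" using e0 M by simp
    have "cin a b (Suc i) = (M * Q + r) div (M * 2)" unfolding cin_def using e1 e2 Q_def by (simp add: mult.commute)
    also have "\<dots> = Q div 2" using k by (simp add: div_mult2_eq)
    finally show ?thesis using Q_def M_def by simp
  qed
qed

lemma mod2_add3: "((x::nat) + y + c) mod 2 = (x mod 2 + y mod 2 + c) mod 2"
proof -
  have "((x::nat) + y + c) mod 2 = ((x + y) mod 2 + c) mod 2" by (rule mod_add_left_eq[symmetric])
  also have "(x + y) mod 2 = (x mod 2 + y mod 2) mod 2" by (rule mod_add_eq[symmetric])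
  also have "((x mod 2 + y mod 2) mod 2 + c) mod 2 = (x mod 2 + y mod 2 + c) mod 2" by (rule mod_add_left_eq)
  finally show ?thesis .
qed

lemma addbitM:
  assumes M: "(M::nat) \<noteq> 0"
  shows "(a + b + 1) div M mod 2 = (a div M mod 2 + b div M mod 2 + (a mod M + b mod M + 1) div M) mod 2"
proof -
  have e: "a + b + 1 = (a mod M + b mod M + 1) + (a div M + b div M) * M" by (simp add: algebra_simps)
  have "(a + b + 1) div M = (a div M + b div M) + (a mod M + b mod M + 1) div M"
    by (subst e, rule div_mult_self1[OF M])
  then show ?thesis using mod2_add3[of "a div M" "b div M" "(a mod M + b mod M + 1) div M"] by simp
qed

lemma addbit: "(a + b + 1) div 2^i mod 2 = (a div 2^i mod 2 + b div 2^i mod 2 + cin a b i) mod 2"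
  unfolding cin_def by (rule addbitM) simp




locale cq = fixes z :: nat assumes z1: "z \<ge> 1"
begin

fun V :: "nat \<Rightarrow> nat" where
  "V 0 = z"
| "V (Suc k) = 3 * (V k div 2 ^ tz (V k)) + 1"

definition ok :: "nat \<Rightarrow> nat" where "ok k = V k div 2 ^ tz (V k)"

fun e :: "nat \<Rightarrow> int" where
  "e 0 = -1"
| "e (Suc k) = e k - int (tz (V k))"

definition p :: "nat \<Rightarrow> int" where "p k = e k - int (tz (V k))"

definition PP :: int where "PP = p 0"

lemma V_pos: "V k > 0"
  using z1 by (cases k) auto

lemma ok_odd: "odd (ok k)" using tz_dec[OF V_pos] ok_def by simp

lemma V_dec: "V k = 2 ^ tz (V k) * ok k" using tz_dec[OF V_pos] ok_def by simp

lemma V_dec_s: "2 ^ tz (V k) * ok k = V k" by (rule V_dec[symmetric])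

lemma V_decb: "tz (V k) = t \<Longrightarrow> 2 ^ t * ok k = V k" by (metis V_dec)

lemma z_dec: "2 ^ tz z * ok 0 = z" using V_decb[of 0 "tz z"] by simp

lemma V_Suc: "V (Suc k) = 3 * ok k + 1" by (simp add: ok_def)

lemma e_Suc: "e (Suc k) = p k" by (simp add: p_def)

declare V.simps(2)[simp del] e.simps(2)[simp del]

lemma tz_ge1: "k > 0 \<Longrightarrow> tz (V k) \<ge> 1"
proof -
  assume "k > 0" then obtain j where "k = Suc j" by (cases k) auto
  then have "even (V k)" using ok_odd[of j] by (simp add: V_Suc)
  then show ?thesis using tz_even V_pos by blast
qed

lemma p_le_e: "p k \<le> e k" by (simp add: p_def)

lemma p_lt_e: "k > 0 \<Longrightarrow> p k + 1 \<le> e k" using tz_ge1 by (simp add: p_def)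

lemma p_Suc_lt: "p (Suc k) < p k"
  using p_lt_e[of "Suc k"] by (simp add: e_Suc)

lemma p_le_PP: "p k \<le> PP"
proof (induction k)
  case 0 then show ?case by (simp add: PP_def)
next
  case (Suc k) then show ?case using p_Suc_lt[of k] by simp
qed

lemma e_le_PP: "k > 0 \<Longrightarrow> e k \<le> PP"
  by (cases k) (auto simp: e_Suc p_le_PP)

lemma PP_le: "PP \<le> -1" unfolding PP_def using p_le_e[of 0] by simp

definition bitrow :: "nat \<Rightarrow> int \<Rightarrow> bool" where
  "bitrow k x = odd (V k div 2 ^ nat (e k - x))"

lemma bitrow_zero: "p k < x \<Longrightarrow> x \<le> e k \<Longrightarrow> \<not> bitrow k x"
  unfolding bitrow_def using low_bits_zero[OF V_pos, of "nat (e k - x)" k]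
  by (simp add: p_def)

lemma bitrow_low: "x \<le> p k \<Longrightarrow> bitrow k x = odd (ok k div 2 ^ nat (p k - x))"
proof -
  assume a: "x \<le> p k"
  have "nat (e k - x) = tz (V k) + nat (p k - x)" using a by (simp add: p_def)
  then show ?thesis unfolding bitrow_def ok_def using high_bits[OF V_pos] by simp
qed

lemma bitrow_p: "bitrow k (p k)" using bitrow_low[of "p k" k] ok_odd by simp

lemma bitrow_Suc: "bitrow (Suc k) x = odd ((3 * ok k + 1) div 2 ^ nat (p k - x))"
  by (simp add: bitrow_def V_Suc e_Suc)

definition carry :: "nat \<Rightarrow> int \<Rightarrow> bool" where
  "carry k x = (cin (ok k) (2 * ok k) (Suc (nat (p k - x))) = 1)"

definition ts :: "nat \<Rightarrow> int \<Rightarrow> int" where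
  "ts k x = (if k = 0 then 0 else int k + PP - x)"
definition tc :: "nat \<Rightarrow> int \<Rightarrow> int" where
  "tc k x = int k + 1 + PP - x"
definition tsp :: "nat \<Rightarrow> int" where
  "tsp k = int k + 1 + PP - p k"

definition Gk :: "nat \<Rightarrow> nat \<Rightarrow> nat \<Rightarrow> int \<Rightarrow> state" where
  "Gk t t' k x =
    (if x = p k + 1 \<and> int t' \<ge> tsp k then (Some False, Some True)
     else if x \<le> e k \<and> int t \<ge> ts k x then
       (Some (bitrow k x), if x \<le> p k \<and> int t \<ge> tc k x then Some (carry k x) else None)
     else (None, None))"

definition G :: "nat \<Rightarrow> nat \<Rightarrow> config" where
  "G t t' = (\<lambda>(x, y). if y > 0 then (None, None) else Gk t t' (nat (- y)) x)"

lemma G_pos: "y > 0 \<Longrightarrow> G t t' (x, y) = (None, None)" by (simp add: G_def)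
lemma G_row: "G t t' (x, - int k) = Gk t t' k x" by (simp add: G_def)

end




context cq begin

lemma fire_imp:
  assumes h1: "Gk t t k (x - 1) = (Some True, None)"
    and h2: "\<forall>i::int. i \<ge> 0 \<longrightarrow> undef_or_zero (Gk t t k (x + i))"
  shows "x = p k + 1 \<and> int t = int k + PP - p k"
proof -
  have ns: "\<not> (x - 1 = p k + 1 \<and> int t \<ge> tsp k)" using h1 by (auto simp: Gk_def)
  then have d: "x - 1 \<le> e k \<and> int t \<ge> ts k (x - 1)" and b: "bitrow k (x - 1)"
    and nc: "\<not> (x - 1 \<le> p k \<and> int t \<ge> tc k (x - 1))"
    using h1 by (auto simp: Gk_def split: if_splits)
  have le: "x - 1 \<le> p k" using bitrow_zero[of k "x - 1"] b d by fastforce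
  have eq: "x - 1 = p k"
  proof (rule ccontr)
    assume "x - 1 \<noteq> p k"
    then have lt: "x \<le> p k" using le by simp
    have "undef_or_zero (Gk t t k (x + (p k - x)))" using h2[rule_format, of "p k - x"] lt by simp
    then have u: "undef_or_zero (Gk t t k (p k))" by simp
    have "p k \<le> e k" by (rule p_le_e)
    moreover have "int t \<ge> ts k (p k)" using d lt by (auto simp: ts_def)
    ultimately have "fst (Gk t t k (p k)) = Some True" using bitrow_p by (auto simp: Gk_def)
    then show False using u by (auto simp: undef_or_zero_def)
  qed
  have "int t < tc k (p k)" using nc eq by auto
  moreover have "int t \<ge> ts k (p k)" using d eq by simp
  ultimately show ?thesis using eq by (auto simp: ts_def tc_def PP_def split: if_splits)
qed

lemma fire_rev:
  assumes "x = p k + 1" "int t = int k + PP - p k"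
  shows "Gk t t k (x - 1) = (Some True, None) \<and> (\<forall>i::int. i \<ge> 0 \<longrightarrow> undef_or_zero (Gk t t k (x + i)))"
proof
  have "ts k (p k) \<le> int t" using assms by (auto simp: ts_def PP_def)
  then show "Gk t t k (x - 1) = (Some True, None)"
    using assms bitrow_p p_le_e[of k] by (auto simp: Gk_def tc_def tsp_def)
next
  show "\<forall>i::int. i \<ge> 0 \<longrightarrow> undef_or_zero (Gk t t k (x + i))"
  proof (intro allI impI)
    fix i :: int assume "i \<ge> 0"
    then have gt: "p k < x + i" using assms by simp
    show "undef_or_zero (Gk t t k (x + i))"
      using gt bitrow_zero[of k "x + i"] assms by (auto simp: Gk_def undef_or_zero_def tsp_def)
  qed
qed

lemma fire_iff:
  "(Gk t t k (x - 1) = (Some True, None) \<and> undef_or_zero (Gk t t k x)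
     \<and> (\<forall>i::int. i \<ge> 1 \<longrightarrow> undef_or_zero (Gk t t k (x + i))))
   \<longleftrightarrow> (x = p k + 1 \<and> int t = int k + PP - p k)"
proof
  assume a: "Gk t t k (x - 1) = (Some True, None) \<and> undef_or_zero (Gk t t k x)
     \<and> (\<forall>i::int. i \<ge> 1 \<longrightarrow> undef_or_zero (Gk t t k (x + i)))"
  have "\<forall>i::int. i \<ge> 0 \<longrightarrow> undef_or_zero (Gk t t k (x + i))"
  proof (intro allI impI)
    fix i :: int assume "i \<ge> 0"
    then show "undef_or_zero (Gk t t k (x + i))" using a by (cases "i = 0") auto
  qed
  then show "x = p k + 1 \<and> int t = int k + PP - p k" using fire_imp a by blast
next
  assume "x = p k + 1 \<and> int t = int k + PP - p k"
  then show "Gk t t k (x - 1) = (Some True, None) \<and> undef_or_zero (Gk t t k x)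
     \<and> (\<forall>i::int. i \<ge> 1 \<longrightarrow> undef_or_zero (Gk t t k (x + i)))"
    using fire_rev[of x k t] by (metis add.right_neutral order_refl zero_le_one order_trans)
qed

lemma Gk_Suc_t': "Gk t (Suc t) k x =
   (if x = p k + 1 \<and> int t = int k + PP - p k then (Some False, Some True) else Gk t t k x)"
  by (auto simp: Gk_def tsp_def)

lemma nonlocal_G: "nonlocal_step (G t t) = G t (Suc t)"
proof (rule ext, clarify)
  fix x y :: int
  show "nonlocal_step (G t t) (x, y) = G t (Suc t) (x, y)"
  proof (cases "y > 0")
    case True then show ?thesis by (simp add: nonlocal_step_def G_pos)
  next
    case False
    then obtain k where y: "y = - int k" by (metis neg_0_le_iff_le nonneg_int_cases not_less minus_minus)
    have "nonlocal_step (G t t) (x, y) =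
      (if Gk t t k (x - 1) = (Some True, None) \<and> undef_or_zero (Gk t t k x)
        \<and> (\<forall>i::int. i \<ge> 1 \<longrightarrow> undef_or_zero (Gk t t k (x + i)))
       then (Some False, Some True) else Gk t t k x)"
      unfolding y by (simp only: nonlocal_step_def prod.case G_row)
    also have "\<dots> = (if x = p k + 1 \<and> int t = int k + PP - p k then (Some False, Some True) else Gk t t k x)"
      by (simp only: fire_iff)
    also have "\<dots> = Gk t (Suc t) k x" by (rule Gk_Suc_t'[symmetric])
    finally show ?thesis by (simp add: y G_row)
  qed
qed

end



lemma LS_def: "C (x,y) = (Some s, Some c) \<Longrightarrow> local_step C (x,y) = C (x,y)"
  by (simp add: local_step_def)
lemma LS_i: "C (x,y) = (Some s, None) \<Longrightarrow> C (x+1,y) = (Some s', Some c') \<Longrightarrow>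
   local_step C (x,y) = (Some s, Some (of_bool s + of_bool s' + of_bool c' \<ge> (2::nat)))"
  by (simp add: local_step_def)
lemma LS_i_no: "C (x,y) = (Some s, None) \<Longrightarrow> \<not> (\<exists>s' c'. C (x+1,y) = (Some s', Some c')) \<Longrightarrow>
   local_step C (x,y) = C (x,y)"
  by (auto simp: local_step_def split: option.splits prod.splits)
lemma LS_ii: "C (x,y) = (None, None) \<Longrightarrow> C (x,y+1) = (Some s, None) \<Longrightarrow> C (x+1,y+1) = (Some s', Some c') \<Longrightarrow>
   local_step C (x,y) = (Some (odd (of_bool s + of_bool s' + of_bool c' :: nat)), None)"
  by (simp add: local_step_def)
lemma LS_ii_no: "C (x,y) = (None, None) \<Longrightarrow>
   \<not> (\<exists>s. C (x,y+1) = (Some s, None)) \<or> \<not> (\<exists>s' c'. C (x+1,y+1) = (Some s', Some c')) \<Longrightarrow>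
   local_step C (x,y) = C (x,y)"
  by (auto simp: local_step_def split: option.splits prod.splits)

lemma of_bool_odd: "(of_bool (odd n) :: nat) = n mod 2"
  by (cases "odd n") (auto simp: odd_iff_mod_2_eq_one even_iff_mod_2_eq_zero)

lemma of_bool_cin: "(of_bool (cin a b i = 1) :: nat) = cin a b i"
  using cin_le1[of a b i] by (cases "cin a b i = 1") auto

lemma odd_cong_mod: "(a::nat) mod 2 = b mod 2 \<Longrightarrow> odd a = odd b"
  by (simp add: odd_iff_mod_2_eq_one)

lemma three_bits: "(A::nat) \<le> 1 \<Longrightarrow> B \<le> 1 \<Longrightarrow> C \<le> 1 \<Longrightarrow> (2 \<le> A + B + C) = ((A + B + C) div 2 = 1)"
proof -
  assume "A \<le> 1" "B \<le> 1" "C \<le> 1"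
  then have "A = 0 \<or> A = 1" "B = 0 \<or> B = 1" "C = 0 \<or> C = 1" by auto
  then show ?thesis by (elim disjE) auto
qed

lemma double_bit: "(2 * a) div 2 ^ Suc i = (a::nat) div 2 ^ i" by simp

context cq begin

lemma val_i_inner:
  assumes "x + 1 \<le> p k"
  shows "(of_bool (bitrow k x) + of_bool (bitrow k (x+1)) + of_bool (carry k (x+1)) \<ge> (2::nat)) = carry k x"
    and "odd (of_bool (bitrow k x) + of_bool (bitrow k (x+1)) + of_bool (carry k (x+1)) :: nat) = bitrow (Suc k) x"
proof -
  define i where "i = nat (p k - x)"
  have i1: "nat (p k - (x + 1)) = i - 1" "i \<ge> 1" using assms by (auto simp: i_def)
  define oo where "oo = ok k"
  have b1: "(of_bool (bitrow k x) :: nat) = oo div 2^i mod 2"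
    using assms by (simp add: bitrow_low i_def oo_def of_bool_odd)
  have b2: "(of_bool (bitrow k (x+1)) :: nat) = (2*oo) div 2^i mod 2"
  proof -
    have "(2*oo) div 2^i = oo div 2^(i-1)" using i1 double_bit[of oo "i - 1"] by simp
    then show ?thesis using assms i1 by (simp add: bitrow_low oo_def of_bool_odd)
  qed
  have si: "Suc (nat (p k - (x+1))) = i" using i1 by simp
  have "carry k (x+1) = (cin oo (2*oo) i = 1)" unfolding carry_def si oo_def ..
  then have b3: "(of_bool (carry k (x+1)) :: nat) = cin oo (2*oo) i"
    using of_bool_cin[of oo "2*oo" i] by simp
  have c: "carry k x = (cin oo (2*oo) (Suc i) = 1)" by (simp add: carry_def i_def oo_def)
  show "(of_bool (bitrow k x) + of_bool (bitrow k (x+1)) + of_bool (carry k (x+1)) \<ge> (2::nat)) = carry k x"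
    unfolding b1 b2 b3 c cinSuc using cin_le1[of oo "2*oo" i] by (intro three_bits) simp_all
  have "bitrow (Suc k) x = odd ((oo + 2*oo + 1) div 2^i)" by (simp add: bitrow_Suc i_def oo_def)
  also have "\<dots> = odd (oo div 2 ^ i mod 2 + 2 * oo div 2 ^ i mod 2 + cin oo (2 * oo) i)"
    by (rule odd_cong_mod) (rule addbit)
  finally show "odd (of_bool (bitrow k x) + of_bool (bitrow k (x+1)) + of_bool (carry k (x+1)) :: nat) = bitrow (Suc k) x"
    unfolding b1 b2 b3 by simp
qed

lemma val_i_edge:
  assumes "x = p k"
  shows "(of_bool (bitrow k x) + of_bool False + of_bool True \<ge> (2::nat)) = carry k x"
    and "odd (of_bool (bitrow k x) + of_bool False + of_bool True :: nat) = bitrow (Suc k) x"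
proof -
  define oo where "oo = ok k"
  have b1: "(of_bool (bitrow k x) :: nat) = oo mod 2"
    using assms by (simp add: bitrow_low oo_def of_bool_odd)
  have c: "carry k x = (cin oo (2*oo) 1 = 1)" using assms by (simp add: carry_def oo_def)
  have c1: "cin oo (2*oo) 1 = (oo mod 2 + 1) div 2" using cinSuc[of oo "2*oo" 0] cin0 by simp
  show "(of_bool (bitrow k x) + of_bool False + of_bool True \<ge> (2::nat)) = carry k x"
    unfolding b1 c c1
  proof -
    have "oo mod 2 = 0 \<or> oo mod 2 = 1" by auto
    then show "(2 \<le> oo mod 2 + of_bool False + of_bool True) = ((oo mod 2 + 1) div 2 = (1::nat))"
      by (elim disjE) simp_all
  qed
  have h: "bitrow (Suc k) x = odd (3 * oo + 1)" using assms by (simp add: bitrow_Suc oo_def)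
  have h2: "odd (oo mod 2 + of_bool False + of_bool True) = odd (3 * oo + 1)"
  proof (cases "even oo")
    case True
    then have "oo mod 2 = 0" by (simp add: even_iff_mod_2_eq_zero)
    then show "odd (oo mod 2 + of_bool False + of_bool True) = odd (3 * oo + 1)" using True by simp
  next
    case False
    then have "oo mod 2 = 1" by (simp add: odd_iff_mod_2_eq_one)
    then show "odd (oo mod 2 + of_bool False + of_bool True) = odd (3 * oo + 1)" using False by simp
  qed
  show "odd (of_bool (bitrow k x) + of_bool False + of_bool True :: nat) = bitrow (Suc k) x"
    unfolding b1 h h2 ..
qed

end



context cq begin

lemma local_row:
  "local_step (G t (Suc t)) (x, - int k) = Gk (Suc t) (Suc t) k x"
proof -
  let ?C = "G t (Suc t)"
  have hD: "\<And>x k. ?C (x, - int k) = Gk t (Suc t) k x" by (rule G_row)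
  show ?thesis
  proof (cases "x = p k + 1 \<and> int (Suc t) \<ge> tsp k")
    case True
    then show ?thesis by (subst LS_def[where s = False and c = True]) (auto simp: hD Gk_def)
  next
    case nsp: False
    show ?thesis
    proof (cases "x \<le> e k \<and> int t \<ge> ts k x")
      case sd: True
      show ?thesis
      proof (cases "x \<le> p k \<and> int t \<ge> tc k x")
        case True
        then show ?thesis using nsp sd
          by (subst LS_def[where s = "bitrow k x" and c = "carry k x"]) (auto simp: hD Gk_def)
      next
        case nc: False
        have D0: "?C (x, - int k) = (Some (bitrow k x), None)" using nsp sd nc by (auto simp: hD Gk_def)
        show ?thesis
        proof (cases "x \<le> p k \<and> int t + 1 \<ge> tc k x")
          case cc: True
          have tt: "int t + 1 = tc k x" using cc nc by auto
          have tgt: "Gk (Suc t) (Suc t) k x = (Some (bitrow k x), Some (carry k x))"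
            using nsp sd cc by (auto simp: Gk_def ts_def)
          show ?thesis
          proof (cases "x + 1 \<le> p k")
            case True
            have "ts k (x+1) \<le> int t" using tt True by (auto simp: ts_def tc_def)
            then have D1: "?C (x+1, - int k) = (Some (bitrow k (x+1)), Some (carry k (x+1)))"
              using True tt p_le_e[of k] by (auto simp: hD Gk_def tc_def)
            show ?thesis
              by (subst LS_i[OF D0 D1]) (use val_i_inner(1)[OF True] in \<open>simp add: tgt\<close>)
          next
            case False
            then have xp: "x = p k" using cc by simp
            have D1: "?C (x+1, - int k) = (Some False, Some True)"
              using xp tt by (auto simp: hD Gk_def tc_def tsp_def)
            show ?thesis
              by (subst LS_i[OF D0 D1]) (use val_i_edge(1)[OF xp] in \<open>simp add: tgt\<close>)
          qed
        next
          case cc: False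
          have D1: "\<not> (\<exists>s' c'. ?C (x+1, - int k) = (Some s', Some c'))"
            using cc by (auto simp: hD Gk_def tc_def tsp_def)
          have tgt: "Gk (Suc t) (Suc t) k x = (Some (bitrow k x), None)"
            using nsp sd cc by (auto simp: Gk_def ts_def)
          show ?thesis by (subst LS_i_no[where C = "G t (Suc t)", OF D0 D1]) (simp add: D0 tgt)
        qed
      qed
    next
      case nsd: False
      have D0: "?C (x, - int k) = (None, None)" using nsp nsd by (auto simp: hD Gk_def)
      show ?thesis
      proof (cases k)
        case 0
        have D1: "\<not> (\<exists>s. ?C (x, - int k + 1) = (Some s, None))" using 0 by (simp add: G_pos)
        have tgt: "Gk (Suc t) (Suc t) k x = (None, None)" using nsp nsd 0 by (auto simp: Gk_def ts_def)
        show ?thesis using D1 by (subst LS_ii_no[where C = "G t (Suc t)", OF D0]) (auto simp: D0 tgt)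
      next
        case (Suc j)
        have up: "- int k + 1 = - int j" using Suc by simp
        show ?thesis
        proof (cases "x \<le> e k \<and> int t + 1 \<ge> ts k x")
          case True
          have tt: "int t + 1 = int k + PP - x" using True nsd Suc by (auto simp: ts_def)
          have xpj: "x \<le> p j" using True Suc by (simp add: e_Suc)
          have "ts j x \<le> int t" using tt Suc by (auto simp: ts_def)
          then have U0: "?C (x, - int k + 1) = (Some (bitrow j x), None)"
            unfolding up hD using xpj tt Suc p_le_e[of j] by (auto simp: Gk_def tc_def tsp_def)
          have tgt: "Gk (Suc t) (Suc t) k x = (Some (bitrow k x), None)"
            using nsp True tt by (auto simp: Gk_def ts_def tc_def)
          show ?thesis
          proof (cases "x + 1 \<le> p j")
            case True
            have "ts j (x+1) \<le> int t" using tt True Suc by (auto simp: ts_def)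
            then have U1: "?C (x + 1, - int k + 1) = (Some (bitrow j (x+1)), Some (carry j (x+1)))"
              unfolding up hD using True tt Suc p_le_e[of j] by (auto simp: Gk_def tc_def)
            show ?thesis
              by (subst LS_ii[OF D0 U0 U1]) (use val_i_inner(2)[OF True] in \<open>simp add: tgt[unfolded Suc] Suc\<close>)
          next
            case False
            then have xp: "x = p j" using xpj by simp
            have U1: "?C (x + 1, - int k + 1) = (Some False, Some True)"
              unfolding up hD using xp tt Suc by (auto simp: Gk_def tsp_def)
            show ?thesis
              by (subst LS_ii[OF D0 U0 U1]) (use val_i_edge(2)[OF xp] in \<open>simp add: tgt[unfolded Suc] Suc\<close>)
          qed
        next
          case False
          have U1: "\<not> (\<exists>s' c'. ?C (x + 1, - int k + 1) = (Some s', Some c'))"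
            unfolding up hD using False Suc by (auto simp: Gk_def tc_def tsp_def ts_def e_Suc)
          have tgt: "Gk (Suc t) (Suc t) k x = (None, None)" using nsp False by (auto simp: Gk_def)
          show ?thesis using U1 by (subst LS_ii_no[where C = "G t (Suc t)", OF D0]) (auto simp: D0 tgt)
        qed
      qed
    qed
  qed
qed

lemma local_G: "local_step (G t (Suc t)) = G (Suc t) (Suc t)"
proof (rule ext, clarify)
  fix x y :: int
  show "local_step (G t (Suc t)) (x, y) = G (Suc t) (Suc t) (x, y)"
  proof (cases "y > 0")
    case True
    have D0: "G t (Suc t) (x, y) = (None, None)" using True by (simp add: G_pos)
    have "\<not> (\<exists>s. G t (Suc t) (x, y + 1) = (Some s, None))" using True by (simp add: G_pos)
    then show ?thesis by (subst LS_ii_no[where C = "G t (Suc t)", OF D0]) (auto simp: D0 G_pos True)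
  next
    case False
    then obtain k where y: "y = - int k" by (metis neg_0_le_iff_le nonneg_int_cases not_less minus_minus)
    show ?thesis unfolding y local_row G_row ..
  qed
qed

lemma F_G: "F (G t t) = G (Suc t) (Suc t)"
  by (simp add: F_def nonlocal_G local_G)

end



declare bin_rep.simps[simp del]

definition bset :: "nat \<Rightarrow> nat set" where "bset m = {n. odd (m div 2 ^ n)}"

lemma bset_sub: "bset m \<subseteq> {..<m}"
proof
  fix n assume "n \<in> bset m"
  then have o: "odd (m div 2 ^ n)" by (simp add: bset_def)
  have "m div 2 ^ n \<noteq> 0" by (rule ccontr) (use o in simp)
  then have "2 ^ n \<le> m" by (simp add: div_eq_0_iff)
  then show "n \<in> {..<m}" using less_le_trans[OF less_exp[of n]] by simp
qed

lemma bset_fin: "finite (bset m)" using bset_sub finite_subset by blast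

lemma bset_rec: "bset m = (if odd m then {0} else {}) \<union> Suc ` bset (m div 2)"
proof (rule set_eqI)
  fix x show "x \<in> bset m \<longleftrightarrow> x \<in> (if odd m then {0} else {}) \<union> Suc ` bset (m div 2)"
  proof (cases x)
    case 0
    have "0 \<notin> Suc ` bset (m div 2)" by auto
    then show ?thesis using 0 by (simp add: bset_def)
  next
    case (Suc n)
    have "Suc n \<in> Suc ` bset (m div 2) \<longleftrightarrow> n \<in> bset (m div 2)" by (rule inj_image_mem_iff) simp
    moreover have "odd (m div 2 ^ Suc n) = odd (m div 2 div 2 ^ n)" by (simp add: div_mult2_eq)
    ultimately show ?thesis using Suc by (simp add: bset_def)
  qed
qed

lemma bset_sum: "(\<Sum>n\<in>bset m. (2::nat) ^ n) = m"
proof (induction m rule: less_induct)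
  case (less m)
  show ?case
  proof (cases "m = 0")
    case True then show ?thesis by (simp add: bset_def)
  next
    case False
    have lt: "m div 2 < m" using False by simp
    have IH: "(\<Sum>n\<in>bset (m div 2). (2::nat) ^ n) = m div 2" using less.IH[OF lt] .
    have inj: "inj_on Suc (bset (m div 2))" by simp
    have "(\<Sum>n\<in>Suc ` bset (m div 2). (2::nat) ^ n) = (\<Sum>n\<in>bset (m div 2). 2 ^ Suc n)"
      using sum.reindex[OF inj, of "\<lambda>n. (2::nat) ^ n"] by simp
    also have "\<dots> = 2 * (\<Sum>n\<in>bset (m div 2). 2 ^ n)" by (simp add: sum_distrib_left)
    finally have s2: "(\<Sum>n\<in>Suc ` bset (m div 2). (2::nat) ^ n) = 2 * (m div 2)" using IH by simp
    show ?thesis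
    proof (cases "odd m")
      case True
      have bm: "bset m = insert 0 (Suc ` bset (m div 2))" using True bset_rec[of m] by simp
      have n0: "0 \<notin> Suc ` bset (m div 2)" by auto
      have fin: "finite (Suc ` bset (m div 2))" using bset_fin by simp
      have "(\<Sum>n\<in>bset m. (2::nat) ^ n) = 1 + 2 * (m div 2)"
        unfolding bm sum.insert[OF fin n0] s2 by simp
      then show ?thesis using True odd_two_times_div_two_succ[of m] by simp
    next
      case False
      have bm: "bset m = Suc ` bset (m div 2)" using False bset_rec[of m] by simp
      show ?thesis unfolding bm s2 using False by simp
    qed
  qed
qed

lemma bin_rep_0: "bin_rep 0 = []" by (subst bin_rep.simps) simp

lemma rev_bin_rep: "rev (bin_rep n) = (if n = 0 then [] else odd n # rev (bin_rep (n div 2)))"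
  by (subst bin_rep.simps) simp

lemma bin_rep_len: "n < 2 ^ length (bin_rep n)"
proof (induction n rule: bin_rep.induct)
  case (1 n)
  show ?case
  proof (cases "n = 0")
    case True then show ?thesis by (simp add: bin_rep_0)
  next
    case False
    have L: "length (bin_rep n) = Suc (length (bin_rep (n div 2)))"
      using False by (subst bin_rep.simps) simp
    have ih: "n div 2 < 2 ^ length (bin_rep (n div 2))" using 1 False by simp
    have a: "n = 2 * (n div 2) + n mod 2" by simp
    have b: "n mod 2 < 2" by simp
    have "n < 2 * 2 ^ length (bin_rep (n div 2))" using ih a b by linarith
    then show ?thesis using L by simp
  qed
qed

lemma bin_rep_nth: "i < length (bin_rep n) \<Longrightarrow> rev (bin_rep n) ! i = odd (n div 2 ^ i)"
proof (induction n arbitrary: i rule: bin_rep.induct)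
  case (1 n)
  show ?case
  proof (cases "n = 0")
    case True then show ?thesis using 1 by (simp add: bin_rep_0)
  next
    case False
    have r: "rev (bin_rep n) = odd n # rev (bin_rep (n div 2))" using False by (subst rev_bin_rep) simp
    show ?thesis
    proof (cases i)
      case 0 then show ?thesis using r by simp
    next
      case (Suc j)
      have "j < length (bin_rep (n div 2))" using 1(2) r Suc by (metis length_Cons length_rev Suc_less_SucD)
      then show ?thesis using 1(1)[OF False] r Suc by (simp add: div_mult2_eq)
    qed
  qed
qed

lemma bin_rep_high: "length (bin_rep n) \<le> i \<Longrightarrow> n div 2 ^ i = 0"
proof -
  assume "length (bin_rep n) \<le> i"
  then have "(2::nat) ^ length (bin_rep n) \<le> 2 ^ i" by simp
  then have "n < 2 ^ i" using bin_rep_len[of n] by linarith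
  then show ?thesis by (simp add: div_eq_0_iff)
qed

lemma T_half: "(T ^^ j) (2 ^ j * q) = q"
proof (induction j arbitrary: q)
  case 0 then show ?case by simp
next
  case (Suc j)
  have "T (2 ^ Suc j * q) = 2 ^ j * q" by (simp add: T_def)
  then show ?case using Suc by (simp add: funpow_Suc_right del: funpow.simps)
qed

lemma T_half_even: "j < a \<Longrightarrow> even ((T ^^ j) (2 ^ a * q))"
proof -
  assume "j < a"
  then have e: "(2::nat) ^ a * q = 2 ^ j * (2 ^ (a - j) * q)" by (simp add: mult.assoc power_add[symmetric])
  have "(T ^^ j) (2 ^ a * q) = 2 ^ (a - j) * q" unfolding e by (rule T_half)
  then show ?thesis using \<open>j < a\<close> by simp
qed




context cq begin

lemma funpow_split: "(f ^^ (j + 1 + m)) x = (f ^^ j) (f ((f ^^ m) x))"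
  by (induction j) auto

fun idx :: "nat \<Rightarrow> nat" where
  "idx 0 = tz z"
| "idx (Suc k) = idx k + tz (V (Suc k))"

lemma T_step: "T (ok k) = 2 ^ (tz (V (Suc k)) - 1) * ok (Suc k)"
proof -
  obtain b where b: "tz (V (Suc k)) = Suc b" using tz_ge1[of "Suc k"] by (cases "tz (V (Suc k))") auto
  have "V (Suc k) = 2 ^ Suc b * ok (Suc k)" using V_decb[OF b] by (rule sym)
  also have "\<dots> = 2 * (2 ^ b * ok (Suc k))" by (simp only: power_Suc mult.assoc)
  finally have v: "V (Suc k) = 2 * (2 ^ b * ok (Suc k))" .
  have "T (ok k) = V (Suc k) div 2" using ok_odd[of k] by (simp add: T_def V_Suc)
  also have "\<dots> = 2 ^ b * ok (Suc k)" unfolding v by simp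
  finally show ?thesis using b by simp
qed

lemma idx_val: "(T ^^ idx k) z = ok k"
proof (induction k)
  case 0
  have "(T ^^ tz z) z = ok 0" using T_half[of "tz z" "ok 0"] unfolding z_dec .
  then show ?case by simp
next
  case (Suc k)
  define a where "a = tz (V (Suc k))"
  have a1: "a \<ge> 1" using tz_ge1[of "Suc k"] a_def by simp
  have t1: "T (ok k) = 2 ^ (a - 1) * ok (Suc k)" unfolding a_def by (rule T_step)
  have ii: "idx (Suc k) = (a - 1) + 1 + idx k" using a_def a1 by simp
  have "(T ^^ idx (Suc k)) z = (T ^^ (a - 1)) (T ((T ^^ idx k) z))"
    unfolding ii by (rule funpow_split)
  also have "\<dots> = ok (Suc k)" using Suc t1 T_half by simp
  finally show ?case .
qed

lemma idx_gap: "idx k < n \<Longrightarrow> n < idx (Suc k) \<Longrightarrow> even ((T ^^ n) z)"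
proof -
  assume n: "idx k < n" "n < idx (Suc k)"
  define a where "a = tz (V (Suc k))"
  have a1: "a \<ge> 1" using tz_ge1[of "Suc k"] a_def by simp
  have t1: "T (ok k) = 2 ^ (a - 1) * ok (Suc k)" unfolding a_def by (rule T_step)
  define j where "j = n - idx k - 1"
  have j: "n = j + 1 + idx k" "j < a - 1" using n a_def by (auto simp: j_def)
  have "(T ^^ n) z = (T ^^ j) (T ((T ^^ idx k) z))" unfolding j(1)
    by (rule funpow_split)
  then show ?thesis using idx_val t1 T_half_even[OF j(2)] by simp
qed

lemma idx_first: "n < idx 0 \<Longrightarrow> even ((T ^^ n) z)"
  using T_half_even[of n "tz z" "ok 0"] unfolding z_dec by simp

lemma idx_mono: "strict_mono idx"
  unfolding strict_mono_Suc_iff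
proof
  fix n show "idx n < idx (Suc n)" using tz_ge1[of "Suc n"] by simp
qed

definition OS :: "nat set" where "OS = {n. odd ((T ^^ n) z)}"

lemma idx_in: "idx k \<in> OS" using idx_val ok_odd by (simp add: OS_def)

lemma OS_inf: "infinite OS"
proof -
  have "range idx \<subseteq> OS" using idx_in by auto
  moreover have "infinite (range idx)" by (rule range_inj_infinite) (rule strict_mono_imp_inj_on[OF idx_mono])
  ultimately show ?thesis using infinite_super by blast
qed

lemma enum_idx: "enumerate OS k = idx k"
proof (induction k)
  case 0
  show ?case unfolding enumerate_0
  proof (rule Least_equality)
    show "idx 0 \<in> OS" by (rule idx_in)
    fix y assume yy: "y \<in> OS"
    show "idx 0 \<le> y"
    proof (rule ccontr)
      assume "\<not> idx 0 \<le> y"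
      then have "even ((T ^^ y) z)" using idx_first[of y] by simp
      then show False using yy by (simp add: OS_def)
    qed
  qed
next
  case (Suc k)
  show ?case unfolding enumerate_Suc''[OF OS_inf] Suc
  proof (rule Least_equality)
    have "idx (Suc k) \<in> OS" by (rule idx_in)
    moreover have "idx k < idx (Suc k)" using tz_ge1[of "Suc k"] by simp
    ultimately show "idx (Suc k) \<in> OS \<and> idx k < idx (Suc k)" by blast
    fix y assume yy: "y \<in> OS \<and> idx k < y"
    show "idx (Suc k) \<le> y"
    proof (rule ccontr)
      assume "\<not> idx (Suc k) \<le> y"
      then have "even ((T ^^ y) z)" using idx_gap[of k y] yy by simp
      then show False using yy by (simp add: OS_def)
    qed
  qed
qed

lemma odd_term_ok: "odd_term z k = ok k"
  unfolding odd_term_def using enum_idx idx_val by (simp add: OS_def[symmetric])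

end



context cq begin

lemma G0: "G 0 0 = c0 (bin_rep z)"
proof (rule ext, clarify)
  fix x y :: int
  show "G 0 0 (x, y) = c0 (bin_rep z) (x, y)"
  proof (cases "y > 0")
    case True then show ?thesis by (simp add: G_pos c0_def)
  next
    case False
    then obtain k where y: "y = - int k" by (metis neg_0_le_iff_le nonneg_int_cases not_less minus_minus)
    have ns: "\<not> (0 \<ge> tsp k)" using p_le_PP[of k] by (simp add: tsp_def)
    have g: "G 0 0 (x, y) = Gk 0 0 k x" by (simp only: y G_row)
    show ?thesis
    proof (cases k)
      case (Suc j)
      have "\<not> (x \<le> e k \<and> 0 \<ge> ts k x)" using e_le_PP[of k] Suc by (auto simp: ts_def)
      then show ?thesis unfolding g using ns Suc by (simp add: y Gk_def c0_def)
    next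
      case 0
      show ?thesis
      proof (cases "x \<le> -1")
        case False then show ?thesis unfolding g using ns 0 by (simp add: y Gk_def c0_def)
      next
        case True
        have nc: "\<not> (x \<le> p 0 \<and> 0 \<ge> tc 0 x)" by (auto simp: tc_def PP_def)
        have ns0: "\<not> (0 \<ge> tsp 0)" using ns 0 by simp
        have "Gk 0 0 0 x = (Some (bitrow 0 x), None)" using ns0 True nc by (auto simp: Gk_def ts_def)
        moreover have "c0 (bin_rep z) (x, 0) = (Some (bitrow 0 x), None)"
        proof -
          have n1: "nat (- x) - 1 = nat (- 1 - x)" using True by simp
          have br: "bitrow 0 x = odd (z div 2 ^ nat (- 1 - x))" by (simp add: bitrow_def)
          show ?thesis
          proof (cases "nat (- x) \<le> length (bin_rep z)")
            case le: True
            have "c0 (bin_rep z) (x, 0) = (Some (rev (bin_rep z) ! (nat (- x) - 1)), None)"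
              unfolding c0_def using le True by simp
            also have "rev (bin_rep z) ! (nat (- x) - 1) = odd (z div 2 ^ nat (- 1 - x))"
              unfolding n1 by (rule bin_rep_nth) (use le True in linarith)
            finally show ?thesis using br by simp
          next
            case gt: False
            have "c0 (bin_rep z) (x, 0) = (Some False, None)"
              unfolding c0_def using gt True by simp
            moreover have "z div 2 ^ nat (- 1 - x) = 0" by (rule bin_rep_high) (use gt in linarith)
            ultimately show ?thesis using br by simp
          qed
        qed
        ultimately show ?thesis unfolding g using 0 by (simp add: y)
      qed
    qed
  qed
qed

lemma iter_G: "(F ^^ t) (c0 (bin_rep z)) = G t t"
  by (induction t) (simp_all add: G0 F_G)

definition Gkinf :: "nat \<Rightarrow> int \<Rightarrow> state" where
  "Gkinf k x = (if x = p k + 1 then (Some False, Some True)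
     else if x \<le> e k then (Some (bitrow k x), if x \<le> p k then Some (carry k x) else None)
     else (None, None))"

lemma Gk_lim: "int t \<ge> \<bar>tsp k\<bar> + \<bar>ts k x\<bar> + \<bar>tc k x\<bar> \<Longrightarrow> Gk t t k x = Gkinf k x"
  unfolding Gk_def Gkinf_def by (auto split: if_splits)

lemma c_inf_row: "c_inf (bin_rep z) (x, - int k) = Gkinf k x"
proof -
  define N where "N = nat (\<bar>tsp k\<bar> + \<bar>ts k x\<bar> + \<bar>tc k x\<bar>)"
  have ev: "\<And>i. i \<ge> N \<Longrightarrow> (F ^^ i) (c0 (bin_rep z)) (x, - int k) = Gkinf k x"
    using Gk_lim by (simp add: iter_G G_row N_def)
  show ?thesis unfolding c_inf_def
  proof (rule the_equality)
    show "\<exists>n. \<forall>i\<ge>n. (F ^^ i) (c0 (bin_rep z)) (x, - int k) = Gkinf k x" using ev by blast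
    fix v assume "\<exists>n. \<forall>i\<ge>n. (F ^^ i) (c0 (bin_rep z)) (x, - int k) = v"
    then obtain n where "\<forall>i\<ge>n. (F ^^ i) (c0 (bin_rep z)) (x, - int k) = v" by blast
    then show "v = Gkinf k x" using ev[of "max n N"] by simp
  qed
qed

lemma row_result:
  "\<exists>x1::int.
       (\<forall>x. fst (c_inf (bin_rep z) (x, - int k)) \<noteq> None \<longleftrightarrow> x \<le> x1)
     \<and> finite {x. fst (c_inf (bin_rep z) (x, - int k)) = Some True}
     \<and> (\<exists>m::nat.
          (\<Sum>x\<in>{x. x \<le> x1 \<and> fst (c_inf (bin_rep z) (x, - int k)) = Some True}.
              (2::nat) ^ nat (x1 - x))
          = 2 ^ m * odd_term z k)"
proof -
  define x1 where "x1 = max (e k) (p k + 1)"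
  have ones: "\<And>x. fst (c_inf (bin_rep z) (x, - int k)) = Some True \<longleftrightarrow> x \<le> e k \<and> bitrow k x"
    unfolding c_inf_row Gkinf_def using bitrow_zero[of k "p k + 1"] by auto
  define A where "A = {x. x \<le> e k \<and> bitrow k x}"
  have Aim: "A = (\<lambda>n. e k - int n) ` bset (V k)"
  proof (rule set_eqI)
    fix x
    show "x \<in> A \<longleftrightarrow> x \<in> (\<lambda>n. e k - int n) ` bset (V k)"
      unfolding A_def bset_def bitrow_def image_iff
      by (auto intro!: bexI[of _ "nat (e k - x)"])
  qed
  have inj: "inj_on (\<lambda>n. e k - int n) (bset (V k))" by (rule inj_onI) simp
  have h1: "{x. x \<le> x1 \<and> fst (c_inf (bin_rep z) (x, - int k)) = Some True} = A"
    unfolding ones A_def x1_def by auto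
  have h2: "(\<Sum>x\<in>A. (2::nat) ^ nat (x1 - x)) = 2 ^ (nat (x1 - e k) + tz (V k)) * ok k"
  proof -
    have "(\<Sum>x\<in>A. (2::nat) ^ nat (x1 - x)) = (\<Sum>n\<in>bset (V k). 2 ^ nat (x1 - (e k - int n)))"
      unfolding Aim by (simp add: sum.reindex[OF inj])
    also have "\<dots> = (\<Sum>n\<in>bset (V k). 2 ^ nat (x1 - e k) * 2 ^ n)"
    proof (rule sum.cong[OF refl])
      fix n
      have "nat (x1 - (e k - int n)) = nat (x1 - e k) + n" unfolding x1_def by simp
      then show "(2::nat) ^ nat (x1 - (e k - int n)) = 2 ^ nat (x1 - e k) * 2 ^ n" by (simp add: power_add)
    qed
    also have "\<dots> = 2 ^ nat (x1 - e k) * V k" by (simp add: sum_distrib_left[symmetric] bset_sum)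
    also have "\<dots> = 2 ^ (nat (x1 - e k) + tz (V k)) * ok k" unfolding power_add mult.assoc V_dec_s ..
    finally show ?thesis .
  qed
  have h3: "\<forall>x. fst (c_inf (bin_rep z) (x, - int k)) \<noteq> None \<longleftrightarrow> x \<le> x1"
    unfolding c_inf_row Gkinf_def x1_def using p_le_e[of k] by auto
  have h4: "finite {x. fst (c_inf (bin_rep z) (x, - int k)) = Some True}"
    unfolding ones A_def[symmetric] Aim using bset_fin by simp
  show ?thesis
  proof (intro exI[of _ x1] conjI)
    show "\<forall>x. fst (c_inf (bin_rep z) (x, - int k)) \<noteq> None \<longleftrightarrow> x \<le> x1" by (rule h3)
    show "finite {x. fst (c_inf (bin_rep z) (x, - int k)) = Some True}" by (rule h4)
    show "\<exists>m. (\<Sum>x\<in>{x. x \<le> x1 \<and> fst (c_inf (bin_rep z) (x, - int k)) = Some True}. (2::nat) ^ nat (x1 - x))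
          = 2 ^ m * odd_term z k" unfolding h1 h2 odd_term_ok by blast
  qed
qed

end

theorem mainTheorem2:
  fixes z :: nat
  assumes "z \<ge> 1"
  shows "\<forall>y0::int. y0 \<le> 0 \<longrightarrow>
    (\<exists>x1::int.
       (\<forall>x. fst (c_inf (bin_rep z) (x, y0)) \<noteq> None \<longleftrightarrow> x \<le> x1)
     \<and> finite {x. fst (c_inf (bin_rep z) (x, y0)) = Some True}
     \<and> (\<exists>m::nat.
          (\<Sum>x\<in>{x. x \<le> x1 \<and> fst (c_inf (bin_rep z) (x, y0)) = Some True}.
              (2::nat) ^ nat (x1 - x))
          = 2 ^ m * odd_term z (nat (- y0))))"
proof (intro allI impI)
  fix y0 :: int assume "y0 \<le> 0"
  define k where "k = nat (- y0)"
  have yk: "y0 = - int k" using \<open>y0 \<le> 0\<close> by (simp add: k_def)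
  interpret cq z using assms by unfold_locales
  show "\<exists>x1::int.
       (\<forall>x. fst (c_inf (bin_rep z) (x, y0)) \<noteq> None \<longleftrightarrow> x \<le> x1)
     \<and> finite {x. fst (c_inf (bin_rep z) (x, y0)) = Some True}
     \<and> (\<exists>m::nat.
          (\<Sum>x\<in>{x. x \<le> x1 \<and> fst (c_inf (bin_rep z) (x, y0)) = Some True}.
              (2::nat) ^ nat (x1 - x))
          = 2 ^ m * odd_term z (nat (- y0)))"
    unfolding yk using row_result[of k] by simp
qed



end
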